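(* Let $0\to N\to G\xrightarrow{p} Q\to 1$ be a short exact sequence of groups with $N$ abelian (written additively), and let $End^Q_N(G)$ be the set of endomorphisms $\alpha$ of $G$ with $\alpha(N)\subseteq N$ and $p\circ\alpha=p$, equipped with the ring structure with addition $(\alpha_1\boxplus\alpha_2)(x)=\alpha_1(x)-x+\alpha_2(x)$, multiplication $(\alpha_2\boxtimes\alpha_1)(x)=\alpha_2(\alpha_1(x))-\alpha_1(x)+x-\alpha_2(x)+x$ and zero element $\mathrm{id}_G$. Then for all $f,g\in End^Q_N(G)$ one has $f\ast g=f\circ g$, where $f\ast g:=f\boxplus g\boxplus(f\boxtimes g)$. In particular the group $QR(End^Q_N(G))$ of quasi-regular elements coincides with the group $Aut^Q_N(G)$ of automorphisms in $End^Q_N(G)$ under composition.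
   Context: For a ring $R$ with zero $0$, $r\ast s:=r+s+rs$; $r$ is quasi-regular if there is $s$ with $r\ast s=0=s\ast r$, and the quasi-regular elements form a group $QR(R)$ under $\ast$. *)

theory Defs
  imports "HOL-Algebra.Algebra"
begin

(* The group G is written multiplicatively in HOL-Algebra: additive x - y + z
   of the paper is  x \<otimes> inv y \<otimes> z  here.  Maps G -> G are taken
   extensional on carrier G so that function equality is meaningful. *)

definition idG :: "('g, 'b) monoid_scheme \<Rightarrow> 'g \<Rightarrow> 'g" where
  "idG G = (\<lambda>x\<in>carrier G. x)"

definition EndQN :: "('g, 'b) monoid_scheme \<Rightarrow> ('g \<Rightarrow> 'q) \<Rightarrow> 'g set \<Rightarrow> ('g \<Rightarrow> 'g) set" where
  "EndQN G p N = {\<alpha>. \<alpha> \<in> hom G G \<and> \<alpha> \<in> extensional (carrier G) \<and> \<alpha> ` N \<subseteq> N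
                       \<and> (\<forall>x\<in>carrier G. p (\<alpha> x) = p x)}"

definition AutQN :: "('g, 'b) monoid_scheme \<Rightarrow> ('g \<Rightarrow> 'q) \<Rightarrow> 'g set \<Rightarrow> ('g \<Rightarrow> 'g) set" where
  "AutQN G p N = {\<alpha> \<in> EndQN G p N. bij_betw \<alpha> (carrier G) (carrier G)}"

definition boxplus :: "('g, 'b) monoid_scheme \<Rightarrow> ('g \<Rightarrow> 'g) \<Rightarrow> ('g \<Rightarrow> 'g) \<Rightarrow> 'g \<Rightarrow> 'g" where
  "boxplus G a1 a2 = (\<lambda>x\<in>carrier G. a1 x \<otimes>\<^bsub>G\<^esub> inv\<^bsub>G\<^esub> x \<otimes>\<^bsub>G\<^esub> a2 x)"

definition boxtimes :: "('g, 'b) monoid_scheme \<Rightarrow> ('g \<Rightarrow> 'g) \<Rightarrow> ('g \<Rightarrow> 'g) \<Rightarrow> 'g \<Rightarrow> 'g" where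
  "boxtimes G a2 a1 = (\<lambda>x\<in>carrier G. a2 (a1 x) \<otimes>\<^bsub>G\<^esub> inv\<^bsub>G\<^esub> (a1 x) \<otimes>\<^bsub>G\<^esub> x
                          \<otimes>\<^bsub>G\<^esub> inv\<^bsub>G\<^esub> (a2 x) \<otimes>\<^bsub>G\<^esub> x)"

definition qstar :: "('g, 'b) monoid_scheme \<Rightarrow> ('g \<Rightarrow> 'g) \<Rightarrow> ('g \<Rightarrow> 'g) \<Rightarrow> 'g \<Rightarrow> 'g" where
  "qstar G f g = boxplus G (boxplus G f g) (boxtimes G f g)"

(* quasi-regular elements of the ring End^Q_N(G), whose zero is id_G *)
definition QR_EndQN :: "('g, 'b) monoid_scheme \<Rightarrow> ('g \<Rightarrow> 'q) \<Rightarrow> 'g set \<Rightarrow> ('g \<Rightarrow> 'g) set" where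
  "QR_EndQN G p N = {r \<in> EndQN G p N. \<exists>s\<in>EndQN G p N.
        qstar G r s = idG G \<and> qstar G s r = idG G}"

end

theory Submission
  imports Defs
begin

lemma key_identity:
  fixes G (structure)
  assumes G: "group G" and x: "x \<in> carrier G"
    and u: "u \<in> carrier G" and v: "v \<in> carrier G" and w: "w \<in> carrier G"
    and uv: "u \<otimes>\<^bsub>G\<^esub> v = v \<otimes>\<^bsub>G\<^esub> u" and uw: "u \<otimes>\<^bsub>G\<^esub> w = w \<otimes>\<^bsub>G\<^esub> u"
    and vw: "v \<otimes>\<^bsub>G\<^esub> w = w \<otimes>\<^bsub>G\<^esub> v"
  shows "(u \<otimes>\<^bsub>G\<^esub> x) \<otimes>\<^bsub>G\<^esub> inv\<^bsub>G\<^esub> x \<otimes>\<^bsub>G\<^esub> (v \<otimes>\<^bsub>G\<^esub> x) \<otimes>\<^bsub>G\<^esub> inv\<^bsub>G\<^esub> x \<otimes>\<^bsub>G\<^esub>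
     ((w \<otimes>\<^bsub>G\<^esub> (v \<otimes>\<^bsub>G\<^esub> x)) \<otimes>\<^bsub>G\<^esub> inv\<^bsub>G\<^esub> (v \<otimes>\<^bsub>G\<^esub> x) \<otimes>\<^bsub>G\<^esub> x
       \<otimes>\<^bsub>G\<^esub> inv\<^bsub>G\<^esub> (u \<otimes>\<^bsub>G\<^esub> x) \<otimes>\<^bsub>G\<^esub> x)
   = w \<otimes>\<^bsub>G\<^esub> (v \<otimes>\<^bsub>G\<^esub> x)"
proof -
  interpret group G by (rule G)
  have c1: "\<And>a b. a \<in> carrier G \<Longrightarrow> b \<in> carrier G \<Longrightarrow> a \<otimes> (inv a \<otimes> b) = b"
    by (simp add: m_assoc[symmetric])
  have "(u \<otimes> x) \<otimes> inv x \<otimes> (v \<otimes> x) \<otimes> inv x \<otimes>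
     ((w \<otimes> (v \<otimes> x)) \<otimes> inv (v \<otimes> x) \<otimes> x \<otimes> inv (u \<otimes> x) \<otimes> x)
     = u \<otimes> v \<otimes> w \<otimes> inv u \<otimes> x"
    using x u v w by (simp add: m_assoc inv_mult_group c1)
  also have "u \<otimes> v \<otimes> w = v \<otimes> w \<otimes> u"
    using x u v w uv uw by (metis m_assoc)
  also have "v \<otimes> w \<otimes> u \<otimes> inv u \<otimes> x = w \<otimes> (v \<otimes> x)"
    using x u v w vw by (simp add: m_assoc)
  finally show ?thesis .
qed

theorem lemma14:
  fixes G :: "('g, 'b) monoid_scheme" and Q :: "('q, 'c) monoid_scheme"
    and p :: "'g \<Rightarrow> 'q" and N :: "'g set"
  assumes "group G" and "group Q"
    and "p \<in> hom G Q" and "p ` carrier G = carrier Q"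
    and "N = kernel G Q p"
    and "\<forall>x\<in>N. \<forall>y\<in>N. x \<otimes>\<^bsub>G\<^esub> y = y \<otimes>\<^bsub>G\<^esub> x"
  shows "(\<forall>f\<in>EndQN G p N. \<forall>g\<in>EndQN G p N. qstar G f g = compose (carrier G) f g)
         \<and> QR_EndQN G p N = AutQN G p N"
proof -
  interpret G: group G by fact
  interpret Q: group Q by fact
  interpret pH: group_hom G Q p using assms by (simp add: group_hom_def group_hom_axioms_def)
  note Ndef = assms(5)[unfolded kernel_def]
  have comm: "\<And>x y. x \<in> N \<Longrightarrow> y \<in> N \<Longrightarrow> x \<otimes>\<^bsub>G\<^esub> y = y \<otimes>\<^bsub>G\<^esub> x" using assms(6) by blast
  have NC: "N \<subseteq> carrier G" using Ndef by auto
  have inN: "a \<otimes>\<^bsub>G\<^esub> inv\<^bsub>G\<^esub> x \<in> N" if "a \<in> carrier G" "x \<in> carrier G" "p a = p x" for a x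
    using that by (simp add: Ndef pH.hom_mult pH.hom_inv)
  have endc: "f x \<in> carrier G" if "f \<in> EndQN G p N" "x \<in> carrier G" for f x
    using that unfolding EndQN_def hom_def by auto
  have endp: "p (f x) = p x" if "f \<in> EndQN G p N" "x \<in> carrier G" for f x
    using that unfolding EndQN_def by auto
  have decomp: "f x = (f x \<otimes>\<^bsub>G\<^esub> inv\<^bsub>G\<^esub> x) \<otimes>\<^bsub>G\<^esub> x" if "f \<in> EndQN G p N" "x \<in> carrier G" for f x
    using that endc[OF that] by (simp add: G.m_assoc)
  have part1: "qstar G f g = compose (carrier G) f g"
    if f: "f \<in> EndQN G p N" and g: "g \<in> EndQN G p N" for f g
  proof
    fix x
    show "qstar G f g x = compose (carrier G) f g x"
    proof (cases "x \<in> carrier G")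
      case False
      then show ?thesis by (simp add: qstar_def boxplus_def compose_def)
    next
      case True
      define u where "u = f x \<otimes>\<^bsub>G\<^esub> inv\<^bsub>G\<^esub> x"
      define v where "v = g x \<otimes>\<^bsub>G\<^esub> inv\<^bsub>G\<^esub> x"
      define w where "w = f (g x) \<otimes>\<^bsub>G\<^esub> inv\<^bsub>G\<^esub> (g x)"
      have gx: "g x \<in> carrier G" using endc g True by blast
      have uN: "u \<in> N" unfolding u_def using inN endc endp f True by blast
      have vN: "v \<in> N" unfolding v_def using inN endc endp g True by blast
      have wN: "w \<in> N" unfolding w_def using inN endc endp f gx by blast
      have a: "f x = u \<otimes>\<^bsub>G\<^esub> x" unfolding u_def using decomp f True .
      have b: "g x = v \<otimes>\<^bsub>G\<^esub> x" unfolding v_def using decomp g True .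
      have c: "f (g x) = w \<otimes>\<^bsub>G\<^esub> (v \<otimes>\<^bsub>G\<^esub> x)" unfolding w_def using decomp[OF f gx] b by simp
      have c2: "f (v \<otimes>\<^bsub>G\<^esub> x) = w \<otimes>\<^bsub>G\<^esub> (v \<otimes>\<^bsub>G\<^esub> x)" using b c by simp
      have "qstar G f g x = (u \<otimes>\<^bsub>G\<^esub> x) \<otimes>\<^bsub>G\<^esub> inv\<^bsub>G\<^esub> x \<otimes>\<^bsub>G\<^esub> (v \<otimes>\<^bsub>G\<^esub> x) \<otimes>\<^bsub>G\<^esub> inv\<^bsub>G\<^esub> x \<otimes>\<^bsub>G\<^esub>
     ((w \<otimes>\<^bsub>G\<^esub> (v \<otimes>\<^bsub>G\<^esub> x)) \<otimes>\<^bsub>G\<^esub> inv\<^bsub>G\<^esub> (v \<otimes>\<^bsub>G\<^esub> x) \<otimes>\<^bsub>G\<^esub> x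
       \<otimes>\<^bsub>G\<^esub> inv\<^bsub>G\<^esub> (u \<otimes>\<^bsub>G\<^esub> x) \<otimes>\<^bsub>G\<^esub> x)"
        using True by (simp add: qstar_def boxplus_def boxtimes_def a b c2)
      also have "\<dots> = w \<otimes>\<^bsub>G\<^esub> (v \<otimes>\<^bsub>G\<^esub> x)"
        by (rule key_identity[OF assms(1) True]) (use uN vN wN NC comm in auto)
      also have "\<dots> = compose (carrier G) f g x" using True c by (simp add: compose_def)
      finally show ?thesis .
    qed
  qed
  have idG_eq: "compose (carrier G) f g = idG G \<longleftrightarrow> (\<forall>x\<in>carrier G. f (g x) = x)" for f g
    unfolding idG_def compose_def by (auto simp: fun_eq_iff restrict_def split: if_splits)
  have "QR_EndQN G p N = AutQN G p N"
  proof
    show "QR_EndQN G p N \<subseteq> AutQN G p N"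
    proof
      fix r assume "r \<in> QR_EndQN G p N"
      then obtain s where r: "r \<in> EndQN G p N" and s: "s \<in> EndQN G p N"
        and rs: "qstar G r s = idG G" and sr: "qstar G s r = idG G"
        unfolding QR_EndQN_def by blast
      have 1: "\<forall>x\<in>carrier G. r (s x) = x" using rs part1[OF r s] idG_eq by metis
      have 2: "\<forall>x\<in>carrier G. s (r x) = x" using sr part1[OF s r] idG_eq by metis
      have "bij_betw r (carrier G) (carrier G)"
        by (rule bij_betw_byWitness[where f'=s]) (use 1 2 endc r s in auto)
      then show "r \<in> AutQN G p N" using r unfolding AutQN_def by blast
    qed
  next
    show "AutQN G p N \<subseteq> QR_EndQN G p N"
    proof
      fix r assume "r \<in> AutQN G p N"
      then have r: "r \<in> EndQN G p N" and bij: "bij_betw r (carrier G) (carrier G)"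
        unfolding AutQN_def by auto
      define s where "s = restrict (inv_into (carrier G) r) (carrier G)"
      have iso: "r \<in> iso G G" using r bij unfolding iso_def EndQN_def by auto
      have ih: "inv_into (carrier G) r \<in> hom G G" using G.iso_set_sym[OF iso] unfolding iso_def by auto
      have sh: "s \<in> hom G G" unfolding s_def by (rule G.hom_restrict[OF ih]) simp
      have sc: "s x \<in> carrier G" if "x \<in> carrier G" for x
        using that bij unfolding s_def by (auto intro: inv_into_into simp: bij_betw_def)
      have rs: "r (s x) = x" if "x \<in> carrier G" for x
        using that bij unfolding s_def by (auto simp: bij_betw_def f_inv_into_f)
      have sr: "s (r x) = x" if "x \<in> carrier G" for x
        using that bij endc[OF r that] unfolding s_def by (auto simp: bij_betw_def inv_into_f_f)
      have sp: "p (s x) = p x" if "x \<in> carrier G" for x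
        using endp[OF r sc[OF that]] rs[OF that] by simp
      have "s ` N \<subseteq> N"
      proof
        fix y assume "y \<in> s ` N"
        then obtain n where n: "n \<in> N" "y = s n" by auto
        then have "n \<in> carrier G" using NC by auto
        then show "y \<in> N" using n sp sc Ndef by auto
      qed
      then have s: "s \<in> EndQN G p N" unfolding EndQN_def using sh sp by (auto simp: s_def)
      have "qstar G r s = idG G" using part1[OF r s] idG_eq rs by metis
      moreover have "qstar G s r = idG G" using part1[OF s r] idG_eq sr by metis
      ultimately show "r \<in> QR_EndQN G p N" using r s unfolding QR_EndQN_def by blast
    qed
  qed
  then show ?thesis using part1 by blast
qed

end
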